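(* If seven distinct points of $\mathcal O_1$ are contained in a $4$-dimensional projective subspace of $\mathrm{PG}(U_1)$, then four of them are contained in a twisted cubic of $\mathcal O_1$, i.e. in $\theta(L)$ for some $q$-order subline $L$ of $\mathrm{PG}(1,q^3)$.
   Context: $q$ is a prime power. Let $U_1\subset\mathbb F_{q^3}^8$ be the set of vectors $(a,b^{q^2},b^{q},c,b,c^{q},c^{q^2},d)$ with $a,d\in\mathbb F_q$, $b,c\in\mathbb F_{q^3}$; it is an $8$-dimensional $\mathbb F_q$-vector space, so $\mathrm{PG}(U_1)\cong\mathrm{PG}(7,q)$. For $(a,b,c,d)\ne 0$ let $P(a,b,c,d)$ be the point of $\mathrm{PG}(U_1)$ spanned by this vector. Let $\mathcal O_1=\{P(1,t,t^{q^2+q},t^{q^2+q+1}) : t\in\mathbb F_{q^3}\}\cup\{P(0,0,0,1)\}$. Let $\theta:\mathrm{PG}(1,q^3)\to\mathcal O_1$ be the bijection $\langle(1,t)\rangle\mapsto P(1,t,t^{q^2+q},t^{q^2+q+1})$, $\langle(0,1)\rangle\mapsto P(0,0,0,1)$. A $q$-order subline of $\mathrm{PG}(1,q^3)$ is the image of $\mathrm{PG}(1,q)=\{\langle(1,t)\rangle:t\in\mathbb F_q\}\cup\{\langle(0,1)\rangle\}$ under an element of $\mathrm{PGL}(2,q^3)$; equivalently, four distinct points of $\mathrm{PG}(1,q^3)$ lie in a common $q$-order subline iff their cross-ratio lies in $\mathbb F_q$. The sets $\theta(L)$, $L$ a $q$-order subline, are twisted cubics, called the twisted cubics of $\mathcal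 O_1$. *)

theory Defs
  imports Main "HOL-Computational_Algebra.Primes"
begin

text \<open>The ambient field is a finite field 'a with q^3 elements, modelling F_{q^3}.
  F_q is its subfield of elements fixed by x \<mapsto> x^q.\<close>

definition Fq :: "nat \<Rightarrow> 'a::field set" where
  "Fq q = {x. x ^ q = x}"

text \<open>Vectors of F_{q^3}^8 are functions nat \<Rightarrow> 'a, with coordinates 0..7 (zero elsewhere).\<close>

definition u1vec :: "nat \<Rightarrow> 'a::field \<Rightarrow> 'a \<Rightarrow> 'a \<Rightarrow> 'a \<Rightarrow> nat \<Rightarrow> 'a" where
  "u1vec q a b c d = (\<lambda>k. if k < 8 then
      [a, b ^ (q^2), b ^ q, c, b, c ^ q, c ^ (q^2), d] ! k else 0)"

definition U1 :: "nat \<Rightarrow> (nat \<Rightarrow> 'a::field) set" where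
  "U1 q = {u1vec q a b c d | a b c d. a \<in> Fq q \<and> d \<in> Fq q}"

definition pt :: "nat \<Rightarrow> (nat \<Rightarrow> 'a::field) \<Rightarrow> (nat \<Rightarrow> 'a) set" where
  "pt q v = {(\<lambda>k. l * v k) | l. l \<in> Fq q}"

definition P :: "nat \<Rightarrow> 'a::field \<Rightarrow> 'a \<Rightarrow> 'a \<Rightarrow> 'a \<Rightarrow> (nat \<Rightarrow> 'a) set" where
  "P q a b c d = pt q (u1vec q a b c d)"

definition O1 :: "nat \<Rightarrow> (nat \<Rightarrow> 'a::field) set set" where
  "O1 q = {P q 1 t (t ^ (q^2 + q)) (t ^ (q^2 + q + 1)) | t. True} \<union> {P q 0 0 0 1}"

text \<open>F_q-subspaces of U_1 of (vector) dimension n, i.e. projective dimension n-1: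
  spans of n F_q-linearly independent vectors of U_1.\<close>

definition Fq_lincomb :: "nat \<Rightarrow> (nat \<Rightarrow> 'a::field) \<Rightarrow> (nat \<Rightarrow> nat \<Rightarrow> 'a) \<Rightarrow> nat \<Rightarrow> 'a" where
  "Fq_lincomb n l w = (\<lambda>k. \<Sum>j<n. l j * w j k)"

definition U1_subspace_dim :: "nat \<Rightarrow> nat \<Rightarrow> (nat \<Rightarrow> 'a::field) set \<Rightarrow> bool" where
  "U1_subspace_dim q n W \<longleftrightarrow>
     (\<exists>w. (\<forall>j<n. w j \<in> U1 q)
        \<and> (\<forall>l. (\<forall>j<n. l j \<in> Fq q) \<and> Fq_lincomb n l w = (\<lambda>k. 0) \<longrightarrow> (\<forall>j<n. l j = 0))
        \<and> W = {Fq_lincomb n l w | l. \<forall>j<n. l j \<in> Fq q})"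

definition proj1 :: "'a::field \<Rightarrow> 'a \<Rightarrow> ('a \<times> 'a) set" where
  "proj1 x y = {(l * x, l * y) | l. True}"

definition PG1 :: "('a::field \<times> 'a) set set" where
  "PG1 = {proj1 x y | x y. (x, y) \<noteq> (0, 0)}"

definition PG1q :: "nat \<Rightarrow> ('a::field \<times> 'a) set set" where
  "PG1q q = {proj1 1 t | t. t \<in> Fq q} \<union> {proj1 0 1}"

definition pgl_act :: "'a::field \<Rightarrow> 'a \<Rightarrow> 'a \<Rightarrow> 'a \<Rightarrow> ('a \<times> 'a) set \<Rightarrow> ('a \<times> 'a) set" where
  "pgl_act al be ga de p = (\<lambda>(x, y). (al * x + be * y, ga * x + de * y)) ` p"

definition q_subline :: "nat \<Rightarrow> ('a::field \<times> 'a) set set \<Rightarrow> bool" where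
  "q_subline q L \<longleftrightarrow> (\<exists>al be ga de. al * de - be * ga \<noteq> 0 \<and> L = pgl_act al be ga de ` PG1q q)"

definition theta :: "nat \<Rightarrow> ('a::field \<times> 'a) set \<Rightarrow> (nat \<Rightarrow> 'a) set" where
  "theta q p = (if \<exists>t. p = proj1 1 t
      then (let t = (THE t. p = proj1 1 t) in P q 1 t (t ^ (q^2 + q)) (t ^ (q^2 + q + 1)))
      else P q 0 0 0 1)"

end

theory Submission
  imports Defs "HOL-Number_Theory.Residues" "HOL-Library.FuncSet"
begin

lemma fin_power_card:
  fixes x :: "'a::{finite,field}"
  shows "x ^ card (UNIV :: 'a set) = x"
proof (cases "x = 0")
  case False
  have "x * (\<Prod>y\<in>UNIV-{0}. x * y) = x * x ^ (card (UNIV :: 'a set) - 1) * \<Prod>(UNIV-{0})"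
    by (simp add: prod.distrib mult_ac)
  also have "x * x ^ (card (UNIV :: 'a set) - 1) = x ^ Suc (card (UNIV :: 'a set) - 1)"
    by (subst power_Suc) auto
  also have "Suc (card (UNIV :: 'a set) - 1) = card (UNIV :: 'a set)"
    using finite_UNIV_card_ge_0[where ?'a = 'a] by simp
  also have "(\<Prod>y\<in>UNIV-{0}. x * y) = (\<Prod>y\<in>UNIV-{0}. y)"
    by (rule prod.reindex_bij_witness[of _ "\<lambda>y. y / x" "\<lambda>y. x * y"]) (use False in auto)
  finally show ?thesis
    by simp
qed (use finite_UNIV_card_ge_0[where ?'a = 'a] in auto)

lemma field_facts:
  fixes q :: nat
  assumes "\<exists>p k. prime p \<and> k > 0 \<and> q = p ^ k"
    and "card (UNIV :: 'a::{finite,field} set) = q ^ 3"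
  shows "q > 0" "\<And>x y::'a. (x + y) ^ q = x ^ q + y ^ q" "\<And>x::'a. x ^ (q^3) = x"
proof -
  obtain p k where pk: "prime p" "k > 0" "q = p ^ k" using assms(1) by blast
  show "q > 0" using pk prime_gt_0_nat by simp
  have cp: "CHAR('a) > 0" by (rule finite_imp_CHAR_pos) simp
  have pc: "prime CHAR('a)" using prime_CHAR_semidom[OF cp] .
  have "CHAR('a) dvd p ^ (k * 3)" using CHAR_dvd_CARD[where 'a='a] assms(2) pk
    by (simp add: power_mult)
  then have "CHAR('a) dvd p" using pc prime_dvd_power by blast
  then have ceq: "CHAR('a) = p" using pk(1) pc by (metis prime_nat_iff prime_gt_1_nat less_irrefl)
  show "\<And>x y::'a. (x + y) ^ q = x ^ q + y ^ q"
    by (rule freshmans_dream') (use pc ceq pk in auto)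
  show "\<And>x::'a. x ^ (q^3) = x" using fin_power_card assms(2) by metis
qed

definition dt :: "'a::field \<times> 'a \<Rightarrow> 'a \<times> 'a \<Rightarrow> 'a" where
  "dt u v = fst u * snd v - snd u * fst v"

definition sel :: "'a \<times> 'a \<Rightarrow> bool \<Rightarrow> 'a" where
  "sel u j = (if j then snd u else fst u)"

definition cr :: "'a::field \<times> 'a \<Rightarrow> 'a \<times> 'a \<Rightarrow> 'a \<times> 'a \<Rightarrow> 'a \<times> 'a \<Rightarrow> 'a" where
  "cr b1 b2 b3 b4 = dt b1 b3 * dt b2 b4 / (dt b1 b4 * dt b2 b3)"

lemma dt_self[simp]: "dt u u = 0" by (simp add: dt_def mult.commute)

lemma con2:
  fixes e1 e2 e3 e4 :: "'a::field"
  assumes "\<forall>j k. e1*sel v1 j*sel w1 k + e2*sel v2 j*sel w2 k + e3*sel v3 j*sel w3 k + e4*sel v4 j*sel w4 k = 0"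
  shows "e1*dt p v1*dt r w1 + e2*dt p v2*dt r w2 + e3*dt p v3*dt r w3 + e4*dt p v4*dt r w4 = 0"
proof -
  have a: "e1*fst v1*fst w1 + e2*fst v2*fst w2 + e3*fst v3*fst w3 + e4*fst v4*fst w4 = 0"
    using assms[rule_format, of False False] by (simp add: sel_def)
  have b: "e1*fst v1*snd w1 + e2*fst v2*snd w2 + e3*fst v3*snd w3 + e4*fst v4*snd w4 = 0"
    using assms[rule_format, of False True] by (simp add: sel_def)
  have c: "e1*snd v1*fst w1 + e2*snd v2*fst w2 + e3*snd v3*fst w3 + e4*snd v4*fst w4 = 0"
    using assms[rule_format, of True False] by (simp add: sel_def)
  have d: "e1*snd v1*snd w1 + e2*snd v2*snd w2 + e3*snd v3*snd w3 + e4*snd v4*snd w4 = 0"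
    using assms[rule_format, of True True] by (simp add: sel_def)
  have "e1*dt p v1*dt r w1 + e2*dt p v2*dt r w2 + e3*dt p v3*dt r w3 + e4*dt p v4*dt r w4
     = fst p * fst r * (e1*snd v1*snd w1 + e2*snd v2*snd w2 + e3*snd v3*snd w3 + e4*snd v4*snd w4)
     - fst p * snd r * (e1*snd v1*fst w1 + e2*snd v2*fst w2 + e3*snd v3*fst w3 + e4*snd v4*fst w4)
     - snd p * fst r * (e1*fst v1*snd w1 + e2*fst v2*snd w2 + e3*fst v3*snd w3 + e4*fst v4*snd w4)
     + snd p * snd r * (e1*fst v1*fst w1 + e2*fst v2*fst w2 + e3*fst v3*fst w3 + e4*fst v4*fst w4)"
    by (simp add: dt_def algebra_simps)
  then show ?thesis using a b c d by simp
qed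

locale fr =
  fixes q :: nat and s :: "'a::field \<Rightarrow> 'a"
  assumes s_def: "s = (\<lambda>x. x ^ q)"
    and qpos: "q > 0"
    and s_add: "\<And>x y. s (x + y) = s x + s y"
    and s_cube: "\<And>x. s (s (s x)) = x"
begin

lemma s_mult: "s (x * y) = s x * s y" by (simp add: s_def power_mult_distrib)
lemma s_0[simp]: "s 0 = 0" using qpos by (simp add: s_def)
lemma s_1[simp]: "s 1 = 1" by (simp add: s_def)
lemma s_minus: "s (- x) = - s x"
  using s_add[of x "-x"] by (simp add: eq_neg_iff_add_eq_0 add.commute)
lemma s_diff: "s (x - y) = s x - s y"
  using s_add[of x "-y"] s_minus[of y] by simp
lemma s_inj: "s x = s y \<Longrightarrow> x = y" using s_cube by metis
lemma s_zero_iff[simp]: "s x = 0 \<longleftrightarrow> x = 0" using s_inj s_0 by metis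
lemma s_div: "s (x / y) = s x / s y" by (simp add: s_def power_divide)

definition sv :: "'a \<times> 'a \<Rightarrow> 'a \<times> 'a" where "sv u = (s (fst u), s (snd u))"

lemma dt_sv: "dt (sv u) (sv v) = s (dt u v)"
  by (simp add: dt_def sv_def s_diff s_mult)

definition Mt :: "'a \<times> 'a \<Rightarrow> bool \<Rightarrow> bool \<Rightarrow> 'a" where
  "Mt u j k = sel (sv u) j * sel (sv (sv u)) k"

end

context fr
begin

lemma Mt_nz: "u \<noteq> (0,0) \<Longrightarrow> \<exists>j k. Mt u j k \<noteq> 0"
  apply (cases u)
  apply (auto simp: Mt_def sel_def sv_def)
  done

lemma L4:
  assumes d12: "dt u1 u2 \<noteq> 0" and d13: "dt u1 u3 \<noteq> 0" and d14: "dt u1 u4 \<noteq> 0"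
    and d23: "dt u2 u3 \<noteq> 0" and d24: "dt u2 u4 \<noteq> 0" and d34: "dt u3 u4 \<noteq> 0"
    and rel: "\<forall>j k. e1*Mt u1 j k + e2*Mt u2 j k + e3*Mt u3 j k + e4*Mt u4 j k = 0"
    and nz: "\<not>(e1 = 0 \<and> e2 = 0 \<and> e3 = 0 \<and> e4 = 0)"
  shows "s (cr u1 u4 u2 u3) = cr u1 u4 u2 u3"
proof -
  have rel': "\<forall>j k. e1*sel (sv u1) j*sel (sv (sv u1)) k + e2*sel (sv u2) j*sel (sv (sv u2)) k
     + e3*sel (sv u3) j*sel (sv (sv u3)) k + e4*sel (sv u4) j*sel (sv (sv u4)) k = 0"
    using rel by (simp add: Mt_def mult.assoc)
  have dtneg: "dt a b = - dt b a" for a b :: "'a \<times> 'a" by (simp add: dt_def)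
  note c = con2[OF rel', unfolded dt_sv]
  have A: "e2*s (dt u1 u2)*s (s (dt u4 u2)) + e3*s (dt u1 u3)*s (s (dt u4 u3)) = 0"
    using c[of "sv u1" "sv (sv u4)"] by (simp only: dt_sv dt_self s_0 mult_zero_left mult_zero_right add_0_left add_0_right)
  have B: "e2*s (dt u4 u2)*s (s (dt u1 u2)) + e3*s (dt u4 u3)*s (s (dt u1 u3)) = 0"
    using c[of "sv u4" "sv (sv u1)"] by (simp only: dt_sv dt_self s_0 mult_zero_left mult_zero_right add_0_left add_0_right)
  have Cc: "e2*s (dt u1 u2)*s (s (dt u3 u2)) + e4*s (dt u1 u4)*s (s (dt u3 u4)) = 0"
    using c[of "sv u1" "sv (sv u3)"] by (simp only: dt_sv dt_self s_0 mult_zero_left mult_zero_right add_0_left add_0_right)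
  have n42: "dt u4 u2 \<noteq> 0" "dt u4 u3 \<noteq> 0" "dt u3 u2 \<noteq> 0" using d24 d34 d23 dtneg[of u4 u2] dtneg[of u4 u3] dtneg[of u3 u2] by auto
  have e2: "e2 \<noteq> 0"
  proof
    assume "e2 = 0"
    then have "e3 = 0" using A d13 n42 by simp
    moreover have "e4 = 0" using Cc \<open>e2 = 0\<close> d14 d34 by simp
    ultimately have "\<forall>j k. e1 * Mt u1 j k = 0" using rel \<open>e2 = 0\<close> by simp
    moreover have "u1 \<noteq> (0,0)" using d12 by (auto simp: dt_def)
    ultimately have "e1 = 0" using Mt_nz[of u1] by (metis mult_eq_0_iff)
    then show False using nz \<open>e2 = 0\<close> \<open>e3 = 0\<close> \<open>e4 = 0\<close> by simp
  qed
  define s12 where "s12 = s (dt u1 u2)"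
  define s13 where "s13 = s (dt u1 u3)"
  define s42 where "s42 = s (dt u4 u2)"
  define s43 where "s43 = s (dt u4 u3)"
  define S12 where "S12 = s (s (dt u1 u2))"
  define S13 where "S13 = s (s (dt u1 u3))"
  define S42 where "S42 = s (s (dt u4 u2))"
  define S43 where "S43 = s (s (dt u4 u3))"
  have A': "e2 * s12 * S42 = - (e3 * s13 * S43)" using A unfolding s12_def S42_def s13_def S43_def
    by (simp add: eq_neg_iff_add_eq_0)
  have B': "e2 * s42 * S12 = - (e3 * s43 * S13)" using B unfolding s42_def S12_def s43_def S13_def
    by (simp add: eq_neg_iff_add_eq_0)
  have "e2 * (s12 * s43 * S42 * S13) = (e2 * s12 * S42) * (s43 * S13)" by (simp add: algebra_simps)
  also have "\<dots> = - (e3 * s13 * S43) * (s43 * S13)" by (simp only: A')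
  also have "\<dots> = (- (e3 * s43 * S13)) * (s13 * S43)" by (simp add: algebra_simps)
  also have "\<dots> = (e2 * s42 * S12) * (s13 * S43)" by (simp only: B')
  also have "\<dots> = e2 * (s13 * s42 * S12 * S43)" by (simp add: algebra_simps)
  finally have key: "s12 * s43 * S42 * S13 = s13 * s42 * S12 * S43" using e2 by simp
  have nzs: "s13 \<noteq> 0" "s42 \<noteq> 0" "S13 \<noteq> 0" "S42 \<noteq> 0"
    unfolding s13_def s42_def S13_def S42_def using d13 n42 by auto
  have cre: "cr u1 u4 u2 u3 = dt u1 u2 * dt u4 u3 / (dt u1 u3 * dt u4 u2)" by (simp add: cr_def)
  have "s (cr u1 u4 u2 u3) = s12 * s43 / (s13 * s42)"
    unfolding cre s12_def s43_def s13_def s42_def by (simp add: s_div s_mult)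
  also have "\<dots> = S12 * S43 / (S13 * S42)" using key nzs by (simp add: field_simps)
  also have "\<dots> = s (s (cr u1 u4 u2 u3))"
    unfolding cre S12_def S43_def S13_def S42_def by (simp add: s_div s_mult)
  finally show ?thesis using s_inj by metis
qed

end

context fr
begin

definition Tv :: "'a \<times> 'a \<Rightarrow> nat \<Rightarrow> 'a" where
  "Tv u = (\<lambda>k. if k < 8 then [fst u * Mt u False False, fst u * Mt u False True,
      fst u * Mt u True False, fst u * Mt u True True, snd u * Mt u False False,
      snd u * Mt u False True, snd u * Mt u True False, snd u * Mt u True True] ! k else 0)"

lemma con1:
  assumes "\<forall>k. (\<Sum>i\<in>I. c i * Tv (a i) k) = 0"
  shows "(\<Sum>i\<in>I. c i * dt p (a i) * Mt (a i) j k) = 0"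
proof -
  define k0 where "k0 = (if j then 2 else 0) + (if k then 1 else (0::nat))"
  have t0: "Tv u k0 = fst u * Mt u j k" for u
    unfolding k0_def Tv_def by (cases j; cases k; simp)
  have t1: "Tv u (k0 + 4) = snd u * Mt u j k" for u
    unfolding k0_def Tv_def by (cases j; cases k; simp)
  have "(\<Sum>i\<in>I. c i * dt p (a i) * Mt (a i) j k)
      = fst p * (\<Sum>i\<in>I. c i * Tv (a i) (k0+4)) - snd p * (\<Sum>i\<in>I. c i * Tv (a i) k0)"
    by (simp add: t0 t1 dt_def sum_distrib_left sum_subtractf[symmetric] algebra_simps)
  then show ?thesis using assms by simp
qed

lemma pw2: "(t::'a) ^ (q^2) = s (s t)"
  by (simp add: s_def power_mult[symmetric] power2_eq_square)
lemma pw3: "(t::'a) ^ (q^3) = t"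
proof -
  have "t ^ (q^3) = s (s (s t))"
    by (simp add: s_def power_mult[symmetric] power3_eq_cube mult.assoc)
  then show ?thesis using s_cube by simp
qed

lemma u1vec_fin: "u1vec q 1 t (t^(q^2+q)) (t^(q^2+q+1)) = Tv (1,t)"
proof -
  have sq: "t^q = s t" by (simp add: s_def)
  have a: "t^(q^2+q) = s (s t) * s t" by (simp add: power_add pw2 s_def)
  have b: "(t^(q^2+q))^q = t * s (s t)"
  proof -
    have "(t^(q^2+q))^q = t^(q^3) * t^(q^2)"
      by (simp add: power_mult[symmetric] power_add[symmetric] power2_eq_square power3_eq_cube algebra_simps)
    then show ?thesis by (simp add: pw2 pw3)
  qed
  have c: "(t^(q^2+q))^(q^2) = s t * t"
  proof -
    have "(t^(q^2+q))^(q^2) = (t^(q^3))^q * t^(q^3)"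
      by (simp add: power_mult[symmetric] power_add[symmetric] power2_eq_square power3_eq_cube algebra_simps)
    then show ?thesis by (simp add: pw3 s_def)
  qed
  have d: "t^(q^2+q+1) = s (s t) * s t * t" by (simp add: power_add pw2 s_def)
  have L: "[1, t ^ (q^2), t ^ q, t^(q^2+q), t, (t^(q^2+q)) ^ q, (t^(q^2+q)) ^ (q^2), t^(q^2+q+1)]
    = [fst (1,t) * Mt (1,t) False False, fst (1,t) * Mt (1,t) False True,
      fst (1,t) * Mt (1,t) True False, fst (1,t) * Mt (1,t) True True, snd (1,t) * Mt (1,t) False False,
      snd (1,t) * Mt (1,t) False True, snd (1,t) * Mt (1,t) True False, snd (1,t) * Mt (1,t) True True]"
    apply (simp only: b c)
    apply (simp add: a d pw2 sq Mt_def sel_def sv_def mult_ac)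
    done
  show ?thesis
    unfolding u1vec_def Tv_def apply (subst L) apply (rule refl) done
qed

lemma u1vec_inf: "u1vec q 0 0 0 1 = Tv (0,1)"
proof -
  have z: "(0::'a)^q = 0" "(0::'a)^(q^2) = 0" using qpos by auto
  have L: "[0, (0::'a) ^ (q^2), 0 ^ q, 0, 0, 0 ^ q, 0 ^ (q^2), 1]
    = [fst (0,1) * Mt (0,1) False False, fst (0,1) * Mt (0,1) False True,
      fst (0,1) * Mt (0,1) True False, fst (0,1) * Mt (0,1) True True, snd (0,1) * Mt (0,1) False False,
      snd (0,1) * Mt (0,1) False True, snd (0,1) * Mt (0,1) True False, snd (0,1) * Mt (0,1) True True]"
    by (simp add: z Mt_def sel_def sv_def)
  show ?thesis
    unfolding u1vec_def Tv_def apply (subst L) apply (rule refl) done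
qed

end

lemma pgl_proj: "pgl_act al be ga de (proj1 x y) = proj1 (al*x+be*y) (ga*x+de*y)"
proof (rule Set.set_eqI)
  fix z
  show "z \<in> pgl_act al be ga de (proj1 x y) \<longleftrightarrow> z \<in> proj1 (al*x+be*y) (ga*x+de*y)"
  proof
    assume "z \<in> pgl_act al be ga de (proj1 x y)"
    then obtain l where "z = (al * (l*x) + be * (l*y), ga * (l*x) + de * (l*y))"
      unfolding pgl_act_def proj1_def by auto
    then have "z = (l * (al*x+be*y), l * (ga*x+de*y))" by (simp add: algebra_simps)
    then show "z \<in> proj1 (al*x+be*y) (ga*x+de*y)" unfolding proj1_def by blast
  next
    assume "z \<in> proj1 (al*x+be*y) (ga*x+de*y)"
    then obtain l where zl: "z = (l * (al*x+be*y), l * (ga*x+de*y))" unfolding proj1_def by auto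
    have "(l*x, l*y) \<in> proj1 x y" unfolding proj1_def by auto
    moreover have "z = (\<lambda>(x, y). (al * x + be * y, ga * x + de * y)) (l*x, l*y)"
      using zl by (simp add: algebra_simps)
    ultimately show "z \<in> pgl_act al be ga de (proj1 x y)" unfolding pgl_act_def by blast
  qed
qed

lemma proj1_scale: "(k::'a::field) \<noteq> 0 \<Longrightarrow> proj1 (k*x) (k*y) = proj1 x y"
  unfolding proj1_def
  apply (auto simp: mult.assoc)
  apply (rule_tac x="l / k" in exI)
  apply (simp add: field_simps)
  done

lemma proj1_inj1: "proj1 1 t = proj1 (1::'a::field) t' \<Longrightarrow> t = t'"
proof -
  assume h: "proj1 1 t = proj1 (1::'a) t'"
  have "(1, t) \<in> proj1 1 t" unfolding proj1_def by (auto intro: exI[of _ 1])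
  then have "(1,t) \<in> proj1 1 t'" using h by simp
  then show ?thesis unfolding proj1_def by auto
qed

lemma proj1_inf_ne: "proj1 0 1 \<noteq> proj1 (1::'a::field) t"
proof
  assume h: "proj1 0 1 = proj1 (1::'a) t"
  have "(0, 1) \<in> proj1 (0::'a) 1" unfolding proj1_def by (auto intro: exI[of _ 1])
  then have "(0,1) \<in> proj1 (1::'a) t" using h by simp
  then show False unfolding proj1_def by auto
qed

lemma theta_fin: "theta q (proj1 1 t) = P q 1 t (t ^ (q^2 + q)) (t ^ (q^2 + q + 1))"
proof -
  have "(THE t'. proj1 1 t = proj1 1 t') = t"
    by (rule the_equality) (auto dest: proj1_inj1)
  then show ?thesis unfolding theta_def by auto
qed

lemma theta_inf: "theta q (proj1 0 (1::'a::field)) = P q 0 0 0 1"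
  unfolding theta_def using proj1_inf_ne[where 'a='a] by auto

lemma SL:
  fixes b1 b2 b3 b4 :: "'a::field \<times> 'a"
  assumes q: "q > 0"
    and d12: "dt b1 b2 \<noteq> 0" and d13: "dt b1 b3 \<noteq> 0" and d14: "dt b1 b4 \<noteq> 0"
    and d23: "dt b2 b3 \<noteq> 0"
    and crq: "(cr b1 b2 b3 b4) ^ q = cr b1 b2 b3 b4"
  shows "\<exists>L. q_subline q L \<and> proj1 (fst b1) (snd b1) \<in> L \<and> proj1 (fst b2) (snd b2) \<in> L
     \<and> proj1 (fst b3) (snd b3) \<in> L \<and> proj1 (fst b4) (snd b4) \<in> L"
proof -
  obtain x1 y1 where b1: "b1 = (x1, y1)" by (cases b1)
  obtain x2 y2 where b2: "b2 = (x2, y2)" by (cases b2)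
  obtain x3 y3 where b3: "b3 = (x3, y3)" by (cases b3)
  obtain x4 y4 where b4: "b4 = (x4, y4)" by (cases b4)
  define D12 where "D12 = x1*y2 - y1*x2"
  define D13 where "D13 = x1*y3 - y1*x3"
  define D14 where "D14 = x1*y4 - y1*x4"
  define D32 where "D32 = x3*y2 - y3*x2"
  have n: "D12 \<noteq> 0" "D13 \<noteq> 0" "D14 \<noteq> 0" "D32 \<noteq> 0"
    using d12 d13 d14 d23 unfolding D12_def D13_def D14_def D32_def b1 b2 b3 b4 dt_def
    by (auto simp: algebra_simps)
  define lam where "lam = D13 / D12"
  define mu where "mu = D32 / D12"
  define al where "al = lam * x2"
  define ga where "ga = lam * y2"
  define be where "be = mu * x1"
  define de where "de = mu * y1"
  define c where "c = cr b1 b2 b3 b4"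
  have ce: "c = D13 * (x2*y4 - y2*x4) / (D14 * (x2*y3 - y2*x3))"
    unfolding c_def cr_def b1 b2 b3 b4 dt_def D13_def D14_def by simp
  have nl: "lam \<noteq> 0" "mu \<noteq> 0" using n unfolding lam_def mu_def by auto
  have det: "al * de - be * ga \<noteq> 0"
  proof -
    have "al * de - be * ga = - (lam * mu * D12)"
      unfolding al_def de_def be_def ga_def D12_def by (simp add: algebra_simps)
    then show ?thesis using nl n by simp
  qed
  define L where "L = pgl_act al be ga de ` PG1q q"
  have qs: "q_subline q L" unfolding q_subline_def L_def using det by blast
  have F0: "(0::'a) \<in> Fq q" "(1::'a) \<in> Fq q" "c \<in> Fq q"
    using q crq unfolding Fq_def c_def by auto
  have "pgl_act al be ga de (proj1 0 1) = proj1 (mu * x1) (mu * y1)"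
    by (simp add: pgl_proj be_def de_def)
  also have "\<dots> = proj1 x1 y1" using proj1_scale nl by blast
  finally have p1: "proj1 (fst b1) (snd b1) \<in> L" unfolding L_def PG1q_def b1 by force
  have "pgl_act al be ga de (proj1 1 0) = proj1 (lam * x2) (lam * y2)"
    by (simp add: pgl_proj al_def ga_def)
  also have "\<dots> = proj1 x2 y2" using proj1_scale nl by blast
  finally have p2: "proj1 (fst b2) (snd b2) \<in> L" unfolding L_def PG1q_def b2 using F0 by force
  have i1: "D13*x2 + D32*x1 = D12*x3" "D13*y2 + D32*y1 = D12*y3"
    unfolding D13_def D32_def D12_def by (simp_all add: algebra_simps)
  have "al + be = (D13*x2 + D32*x1) / D12" "ga + de = (D13*y2 + D32*y1) / D12"
    unfolding al_def be_def ga_def de_def lam_def mu_def by (simp_all add: add_divide_distrib)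
  then have "al + be = x3" "ga + de = y3" using i1 n(1) by simp_all
  then have "pgl_act al be ga de (proj1 1 1) = proj1 x3 y3"
    by (simp add: pgl_proj)
  then have p3: "proj1 (fst b3) (snd b3) \<in> L" unfolding L_def PG1q_def b3 using F0 by force
  define E24 where "E24 = x2*y4 - y2*x4"
  have h32: "x2*y3 - y2*x3 = - D32" by (simp add: D32_def algebra_simps)
  have ce': "c = - (D13 * E24 / (D14 * D32))"
    unfolding ce h32 E24_def by simp
  have id1: "x2 * D14 - x1 * E24 = x4 * D12" "y2 * D14 - y1 * E24 = y4 * D12"
    unfolding D14_def E24_def D12_def by (simp_all add: algebra_simps)
  have "al + be * c = D13/(D12*D14) * (x2*D14 - x1*E24)" "ga + de * c = D13/(D12*D14) * (y2*D14 - y1*E24)"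
    using n unfolding al_def be_def ga_def de_def lam_def mu_def ce' by (simp_all add: field_simps)
  then have k: "al + be * c = (D13 / D14) * x4" "ga + de * c = (D13 / D14) * y4"
    unfolding id1 using n by (simp_all add: field_simps)
  have "pgl_act al be ga de (proj1 1 c) = proj1 ((D13 / D14) * x4) ((D13 / D14) * y4)"
    by (simp add: pgl_proj k)
  also have "\<dots> = proj1 x4 y4" using proj1_scale[of "D13 / D14" x4 y4] n by simp
  finally have p4: "proj1 (fst b4) (snd b4) \<in> L" unfolding L_def PG1q_def b4 using F0 by force
  show ?thesis using qs p1 p2 p3 p4 by blast
qed

lemma DEP:
  fixes v :: "nat \<Rightarrow> nat \<Rightarrow> 'a::field" and w :: "nat \<Rightarrow> nat \<Rightarrow> 'a" and K :: "'a set"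
  assumes fK: "finite K" and K0: "0 \<in> K" and K1: "1 \<in> K"
    and Kd: "\<And>x y. x \<in> K \<Longrightarrow> y \<in> K \<Longrightarrow> x - y \<in> K"
    and Ka: "\<And>x y. x \<in> K \<Longrightarrow> y \<in> K \<Longrightarrow> x + y \<in> K"
    and Km: "\<And>x y. x \<in> K \<Longrightarrow> y \<in> K \<Longrightarrow> x * y \<in> K"
    and vW: "\<forall>i<6. v i \<in> {Fq_lincomb 5 l w | l. \<forall>j<5. l j \<in> K}"
  shows "\<exists>c. (\<forall>i<6. c i \<in> K) \<and> (\<exists>i<6. c i \<noteq> 0) \<and> (\<forall>k. (\<Sum>i<6. c i * v i k) = 0)"
proof -
  define W where "W = {Fq_lincomb 5 l w | l. \<forall>j<5. l j \<in> K}"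
  define D6 where "D6 = PiE {..<6::nat} (\<lambda>_. K)"
  define D5 where "D5 = PiE {..<5::nat} (\<lambda>_. K)"
  have WD: "W \<subseteq> (\<lambda>l. Fq_lincomb 5 l w) ` D5"
  proof
    fix x assume "x \<in> W"
    then obtain l where l: "x = Fq_lincomb 5 l w" "\<forall>j<5. l j \<in> K" unfolding W_def by blast
    have "restrict l {..<5} \<in> D5" using l(2) unfolding D5_def by auto
    moreover have "Fq_lincomb 5 (restrict l {..<5}) w = Fq_lincomb 5 l w"
      unfolding Fq_lincomb_def by (intro ext sum.cong) auto
    ultimately show "x \<in> (\<lambda>l. Fq_lincomb 5 l w) ` D5" using l(1) by (metis rev_image_eqI)
  qed
  have fD5: "finite D5" unfolding D5_def using fK by (intro finite_PiE) auto
  have fD6: "finite D6" unfolding D6_def using fK by (intro finite_PiE) auto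
  have fW: "finite W" using WD fD5 finite_surj by blast
  have cW: "card W \<le> card K ^ 5"
  proof -
    have "card W \<le> card ((\<lambda>l. Fq_lincomb 5 l w) ` D5)" using WD fD5 by (intro card_mono) auto
    also have "\<dots> \<le> card D5" using fD5 card_image_le by blast
    also have "card D5 = card K ^ 5" unfolding D5_def by (simp add: card_PiE)
    finally show ?thesis .
  qed
  have c6: "card D6 = card K ^ 6" unfolding D6_def by (simp add: card_PiE)
  have K2: "card K \<ge> 2"
  proof -
    have "{0, 1} \<subseteq> K" using K0 K1 by auto
    then have "card {0::'a, 1} \<le> card K" using fK card_mono by blast
    then show ?thesis by simp
  qed
  have lt: "card K ^ 5 < card K ^ 6"
    using K2 by (intro power_strict_increasing) auto
  have sum_K: "sum f A \<in> K" if "\<forall>i\<in>A. f i \<in> K" for f and A :: "nat set"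
  proof (cases "finite A")
    case True
    then show ?thesis using that by (induction A rule: finite_induct) (auto simp: K0 Ka)
  qed (simp add: K0)
  define Phi where "Phi = (\<lambda>c. (\<lambda>k. \<Sum>i<6. c i * v i k))"
  have PW: "Phi ` D6 \<subseteq> W"
  proof
    fix x assume "x \<in> Phi ` D6"
    then obtain c where c: "c \<in> D6" "x = Phi c" by blast
    have "\<forall>i<6. \<exists>l. v i = Fq_lincomb 5 l w \<and> (\<forall>j<5. l j \<in> K)" using vW by blast
    then obtain L where L: "\<forall>i<6. v i = Fq_lincomb 5 (L i) w \<and> (\<forall>j<5. L i j \<in> K)" by metis
    define m where "m = (\<lambda>j. \<Sum>i<6. c i * L i j)"
    have mK: "\<forall>j<5. m j \<in> K"
    proof (intro allI impI)
      fix j :: nat assume "j < 5"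
      have "\<forall>i\<in>{..<6::nat}. c i * L i j \<in> K"
      proof
        fix i assume i6: "i \<in> {..<6::nat}"
        then have "c i \<in> K" using c(1) unfolding D6_def by (simp add: PiE_iff)
        moreover have "L i j \<in> K" using L \<open>j < 5\<close> i6 by simp
        ultimately show "c i * L i j \<in> K" by (rule Km)
      qed
      then show "m j \<in> K" unfolding m_def by (rule sum_K)
    qed
    have "x = Fq_lincomb 5 m w"
    proof
      fix k
      have "x k = (\<Sum>i<6. c i * (\<Sum>j<5. L i j * w j k))"
        using c(2) L unfolding Phi_def Fq_lincomb_def by simp
      also have "\<dots> = (\<Sum>i<6. \<Sum>j<5. c i * L i j * w j k)" by (simp add: sum_distrib_left mult.assoc)
      also have "\<dots> = (\<Sum>j<5. \<Sum>i<6. c i * L i j * w j k)" by (rule sum.swap)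
      also have "\<dots> = (\<Sum>j<5. m j * w j k)" unfolding m_def by (simp add: sum_distrib_right)
      finally show "x k = Fq_lincomb 5 m w k" unfolding Fq_lincomb_def by simp
    qed
    then show "x \<in> W" unfolding W_def using mK by blast
  qed
  have "\<not> inj_on Phi D6"
  proof
    assume "inj_on Phi D6"
    then have "card (Phi ` D6) = card D6" by (rule card_image)
    moreover have "card (Phi ` D6) \<le> card W" using PW fW card_mono by blast
    ultimately show False using cW c6 lt by simp
  qed
  then obtain c1 c2 where c12: "c1 \<in> D6" "c2 \<in> D6" "c1 \<noteq> c2" "Phi c1 = Phi c2"
    unfolding inj_on_def by blast
  define c where "c = (\<lambda>i. c1 i - c2 i)"
  have "\<forall>i<6. c i \<in> K" using c12 Kd unfolding c_def D6_def by (auto simp: PiE_iff)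
  moreover have "\<exists>i<6. c i \<noteq> 0"
  proof (rule ccontr)
    assume "\<not> (\<exists>i<6. c i \<noteq> 0)"
    then have "\<And>i. i \<in> {..<6} \<Longrightarrow> c1 i = c2 i" unfolding c_def by auto
    then have "c1 = c2" using PiE_ext c12(1,2) unfolding D6_def by metis
    then show False using c12 by simp
  qed
  moreover have "\<forall>k. (\<Sum>i<6. c i * v i k) = 0"
  proof
    fix k
    have "(\<Sum>i<6. c i * v i k) = Phi c1 k - Phi c2 k"
      unfolding c_def Phi_def by (simp add: sum_subtractf left_diff_distrib)
    then show "(\<Sum>i<6. c i * v i k) = 0" using c12(4) by simp
  qed
  ultimately show ?thesis by blast
qed

lemma sum7: "(\<Sum>i<(7::nat). f i) = f 0 + f 1 + f 2 + f 3 + f 4 + f 5 + (f 6 :: 'a::comm_monoid_add)"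
  by (simp add: eval_nat_numeral add_ac)

context fr
begin

lemma Tv_nz: "u \<noteq> (0,0) \<Longrightarrow> Tv u 0 \<noteq> 0 \<or> Tv u 7 \<noteq> 0"
  by (cases u) (auto simp: Tv_def Mt_def sel_def sv_def)

lemma pt_mem: "(v::nat \<Rightarrow> 'a) \<in> pt q v"
proof -
  have "(1::'a) \<in> Fq q" unfolding Fq_def by simp
  then show ?thesis unfolding pt_def by (auto intro!: exI[of _ 1])
qed

end

theorem mainTheorem5:
  fixes q :: nat and S :: "(nat \<Rightarrow> 'a::{finite, field}) set set"
  assumes "\<exists>p k. prime p \<and> k > 0 \<and> q = p ^ k"
    and "card (UNIV :: 'a set) = q ^ 3"
    and "S \<subseteq> O1 q" and "card S = 7"
    and "\<exists>W. U1_subspace_dim q 5 W \<and> (\<forall>X\<in>S. X \<subseteq> W)"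
  shows "\<exists>L T. q_subline q L \<and> T \<subseteq> S \<and> card T = 4 \<and> T \<subseteq> theta q ` L"
proof -
  note ff = field_facts[OF assms(1) assms(2)]
  interpret fr q "\<lambda>x::'a. x ^ q"
  proof
    show "q > 0" using ff(1) .
    show "\<And>x y::'a. (x + y) ^ q = x ^ q + y ^ q" using ff(2) .
    show "\<And>x::'a. ((x ^ q) ^ q) ^ q = x" using ff(3) by (simp add: power_mult[symmetric] power3_eq_cube)
  qed simp
  have Fq_iff: "x \<in> Fq q \<longleftrightarrow> x ^ q = x" for x :: 'a by (simp add: Fq_def)
  have K0: "(0::'a) \<in> Fq q" using qpos by (simp add: Fq_def)
  have K1: "(1::'a) \<in> Fq q" by (simp add: Fq_def)
  have Kd: "x - y \<in> Fq q" if "x \<in> Fq q" "y \<in> Fq q" for x y :: 'a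
    using that s_diff[of x y] by (simp add: Fq_def)
  have Ka: "x + y \<in> Fq q" if "x \<in> Fq q" "y \<in> Fq q" for x y :: 'a
    using that s_add[of x y] by (simp add: Fq_def)
  have Km: "x * y \<in> Fq q" if "x \<in> Fq q" "y \<in> Fq q" for x y :: 'a
    using that by (simp add: Fq_def power_mult_distrib)
  have fK: "finite (Fq q :: 'a set)" by simp
  obtain W where W: "U1_subspace_dim q 5 W" "\<forall>X\<in>S. X \<subseteq> W" using assms(5) by blast
  obtain w where w: "W = {Fq_lincomb 5 l w | l. \<forall>j<5. l j \<in> Fq q}"
    using W(1) unfolding U1_subspace_dim_def by blast
  define rep where "rep X = (if X = P q 0 0 (0::'a) 1 then ((0::'a),(1::'a))
      else (1, SOME t. X = P q 1 t (t ^ (q^2 + q)) (t ^ (q^2 + q + 1))))" for X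
  have repP: "(rep X = (0,1) \<and> X = P q 0 0 0 1) \<or> (\<exists>t. rep X = (1,t) \<and> X = P q 1 t (t ^ (q^2 + q)) (t ^ (q^2 + q + 1)))"
    if "X \<in> O1 q" for X
  proof (cases "X = P q 0 0 0 1")
    case True
    then show ?thesis unfolding rep_def by simp
  next
    case False
    then have ex: "\<exists>t. X = P q 1 t (t ^ (q^2 + q)) (t ^ (q^2 + q + 1))" using that unfolding O1_def by blast
    define t where "t = (SOME t. X = P q 1 t (t ^ (q^2 + q)) (t ^ (q^2 + q + 1)))"
    have "X = P q 1 t (t ^ (q^2 + q)) (t ^ (q^2 + q + 1))" unfolding t_def using someI_ex[OF ex] .
    moreover have "rep X = (1,t)" unfolding rep_def t_def using False by simp
    ultimately show ?thesis by blast
  qed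
  have repT: "X = pt q (Tv (rep X))" if "X \<in> O1 q" for X
    using repP[OF that] u1vec_fin u1vec_inf unfolding P_def by auto
  have repth: "theta q (proj1 (fst (rep X)) (snd (rep X))) = X" if "X \<in> O1 q" for X
  proof -
    from repP[OF that] show ?thesis
    proof (elim disjE exE conjE)
      assume h1: "rep X = (0,1)" "X = P q 0 0 0 1"
      show ?thesis unfolding h1(1) fst_conv snd_conv theta_inf using h1(2) by simp
    next
      fix t assume h1: "rep X = (1,t)" "X = P q 1 t (t ^ (q^2 + q)) (t ^ (q^2 + q + 1))"
      show ?thesis unfolding h1(1) fst_conv snd_conv theta_fin using h1(2) by simp
    qed
  qed
  have repdt: "dt (rep X) (rep Y) \<noteq> 0" if "X \<in> O1 q" "Y \<in> O1 q" "rep X \<noteq> rep Y" for X Y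
    using repP[OF that(1)] repP[OF that(2)] that(3) by (auto simp: dt_def)
  obtain h where h: "bij_betw h {..<7::nat} S"
    using ex_bij_betw_nat_finite[of S] assms(4) card.infinite by (force simp: atLeast0LessThan)
  have hS: "h i \<in> S" if "i < 7" for i using h that by (auto simp: bij_betw_def)
  have hO: "h i \<in> O1 q" if "i < 7" for i using hS[OF that] assms(3) by blast
  have hinj: "h i \<noteq> h j" if "i < 7" "j < 7" "i \<noteq> j" for i j
    using h that unfolding bij_betw_def inj_on_def by blast
  define a where "a i = rep (h i)" for i
  have adt: "dt (a i) (a j) \<noteq> 0" if "i < 7" "j < 7" "i \<noteq> j" for i j
  proof -
    have "a i \<noteq> a j"
    proof
      assume "a i = a j"
      then have "h i = h j" using repT[OF hO[OF that(1)]] repT[OF hO[OF that(2)]] unfolding a_def by metis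
      then show False using hinj that by blast
    qed
    then show ?thesis using repdt hO that unfolding a_def by blast
  qed
  have aW: "Tv (a i) \<in> W" if "i < 7" for i
  proof -
    have "Tv (a i) \<in> h i" using repT[OF hO[OF that]] pt_mem unfolding a_def by metis
    then show ?thesis using W(2) hS[OF that] by blast
  qed
  have anz: "a i \<noteq> (0,0)" if "i < 7" for i :: nat
  proof -
    define j where "j = (if i = 0 then 1 else (0::nat))"
    have "j < 7" "i \<noteq> j" unfolding j_def by auto
    then have "dt (a i) (a j) \<noteq> 0" using adt that by blast
    then show ?thesis by (auto simp: dt_def)
  qed
  have FIN: ?thesis if H: "i1 < 7" "i2 < 7" "i3 < 7" "i4 < 7" "i1 \<noteq> i2" "i1 \<noteq> i3" "i1 \<noteq> i4"
     "i2 \<noteq> i3" "i2 \<noteq> i4" "i3 \<noteq> i4"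
     "(cr (a i1) (a i2) (a i3) (a i4)) ^ q = cr (a i1) (a i2) (a i3) (a i4)"
   for i1 i2 i3 i4 :: nat
  proof -
    obtain L where L: "q_subline q L" "proj1 (fst (a i1)) (snd (a i1)) \<in> L"
      "proj1 (fst (a i2)) (snd (a i2)) \<in> L" "proj1 (fst (a i3)) (snd (a i3)) \<in> L"
      "proj1 (fst (a i4)) (snd (a i4)) \<in> L"
      using SL[OF qpos adt[of i1 i2] adt[of i1 i3] adt[of i1 i4] adt[of i2 i3] H(11)] H by blast
    define T where "T = h ` {i1, i2, i3, i4}"
    have "T \<subseteq> S" unfolding T_def using hS H by auto
    moreover have "card T = 4"
    proof -
      have "inj_on h {i1, i2, i3, i4}" using hinj H unfolding inj_on_def by blast
      then have "card T = card {i1, i2, i3, i4}" unfolding T_def by (rule card_image)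
      then show ?thesis using H by simp
    qed
    moreover have "T \<subseteq> theta q ` L"
    proof -
      have "h i \<in> theta q ` L" if "i < 7" "proj1 (fst (a i)) (snd (a i)) \<in> L" for i
        using repth[OF hO[OF that(1)]] that(2) unfolding a_def by (metis image_eqI)
      then show ?thesis unfolding T_def using L H by auto
    qed
    ultimately show ?thesis using L(1) by blast
  qed
  have useL4: ?thesis if
    R: "\<forall>j k. e1 * Mt (a i1) j k + e2 * Mt (a i2) j k + e3 * Mt (a i3) j k + e4 * Mt (a i4) j k = 0"
    and NZ: "\<not> (e1 = 0 \<and> e2 = 0 \<and> e3 = 0 \<and> e4 = 0)"
    and H: "i1 < 7" "i2 < 7" "i3 < 7" "i4 < 7" "i1 \<noteq> i2" "i1 \<noteq> i3" "i1 \<noteq> i4"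
     "i2 \<noteq> i3" "i2 \<noteq> i4" "i3 \<noteq> i4"
   for i1 i2 i3 i4 :: nat and e1 e2 e3 e4
  proof -
    have "(cr (a i1) (a i4) (a i2) (a i3)) ^ q = cr (a i1) (a i4) (a i2) (a i3)"
      using L4[OF adt[of i1 i2] adt[of i1 i3] adt[of i1 i4] adt[of i2 i3] adt[of i2 i4] adt[of i3 i4] R NZ] H
      by simp
    then show ?thesis using FIN[of i1 i4 i2 i3] H by simp
  qed
  have vW: "\<forall>i<6. Tv (a i) \<in> {Fq_lincomb 5 l w | l. \<forall>j<5. l j \<in> Fq q}"
    using aW w by simp
  obtain c where c: "\<forall>i<6. c i \<in> Fq q" "\<exists>i<6. c i \<noteq> 0" "\<forall>k. (\<Sum>i<6. c i * Tv (a i) k) = 0"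
    using DEP[OF fK K0 K1 Kd Ka Km vW] by blast
  have vW': "\<forall>i<6. Tv (a (Suc i)) \<in> {Fq_lincomb 5 l w | l. \<forall>j<5. l j \<in> Fq q}"
    using aW w by simp
  obtain c' where c': "\<forall>i<6. c' i \<in> Fq q" "\<exists>i<6. c' i \<noteq> 0" "\<forall>k. (\<Sum>i<6. c' i * Tv (a (Suc i)) k) = 0"
    using DEP[OF fK K0 K1 Kd Ka Km vW'] by blast
  define C where "C i = (if i < 6 then c i else 0)" for i :: nat
  define C' where "C' i = (if 0 < i \<and> i < 7 then c' (i - 1) else 0)" for i :: nat
  have CK: "C i \<in> Fq q" "C' i \<in> Fq q" for i
    using c(1) c'(1) K0 unfolding C_def C'_def by auto
  have relC: "\<forall>k. (\<Sum>i<7. C i * Tv (a i) k) = 0"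
  proof
    fix k
    have e: "{..<7::nat} = insert 6 {..<6}" by auto
    have "(\<Sum>i<7. C i * Tv (a i) k) = (\<Sum>i<6. C i * Tv (a i) k)"
      unfolding e by (simp add: C_def)
    also have "\<dots> = (\<Sum>i<6. c i * Tv (a i) k)" by (rule sum.cong) (auto simp: C_def)
    finally show "(\<Sum>i<7. C i * Tv (a i) k) = 0" using c(3) by simp
  qed
  have relC': "\<forall>k. (\<Sum>i<7. C' i * Tv (a i) k) = 0"
  proof
    fix k
    have "(\<Sum>i<7. C' i * Tv (a i) k) = (\<Sum>i<Suc 6. C' i * Tv (a i) k)" by simp
    also have "\<dots> = C' 0 * Tv (a 0) k + (\<Sum>i<6. C' (Suc i) * Tv (a (Suc i)) k)"
      by (rule sum.lessThan_Suc_shift)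
    also have "\<dots> = (\<Sum>i<6. c' i * Tv (a (Suc i)) k)" by (auto simp: C'_def intro!: sum.cong)
    finally show "(\<Sum>i<7. C' i * Tv (a i) k) = 0" using c'(3) by simp
  qed
  define al where "al i = C i * dt (a 0) (a i)" for i
  define be where "be i = C' i * dt (a 6) (a i)" for i
  have relA: "\<forall>j k. al 1 * Mt (a 1) j k + al 2 * Mt (a 2) j k + al 3 * Mt (a 3) j k
      + al 4 * Mt (a 4) j k + al 5 * Mt (a 5) j k = 0"
  proof (intro allI)
    fix j k
    have "(\<Sum>i\<in>{..<7}. C i * dt (a 0) (a i) * Mt (a i) j k) = 0" by (rule con1[OF relC])
    then show "al 1 * Mt (a 1) j k + al 2 * Mt (a 2) j k + al 3 * Mt (a 3) j k
      + al 4 * Mt (a 4) j k + al 5 * Mt (a 5) j k = 0"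
      unfolding sum7 al_def by (simp add: C_def)
  qed
  have relB: "\<forall>j k. be 1 * Mt (a 1) j k + be 2 * Mt (a 2) j k + be 3 * Mt (a 3) j k
      + be 4 * Mt (a 4) j k + be 5 * Mt (a 5) j k = 0"
  proof (intro allI)
    fix j k
    have "(\<Sum>i\<in>{..<7}. C' i * dt (a 6) (a i) * Mt (a i) j k) = 0" by (rule con1[OF relC'])
    then show "be 1 * Mt (a 1) j k + be 2 * Mt (a 2) j k + be 3 * Mt (a 3) j k
      + be 4 * Mt (a 4) j k + be 5 * Mt (a 5) j k = 0"
      unfolding sum7 be_def by (simp add: C'_def add_ac)
  qed
  have dtz: "dt (a 0) (a i) \<noteq> 0" "dt (a 6) (a i) \<noteq> 0" if "0 < i" "i < 6" for i :: nat
    using adt that by auto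
  have alnz: "\<not> (al 1 = 0 \<and> al 2 = 0 \<and> al 3 = 0 \<and> al 4 = 0 \<and> al 5 = 0)"
  proof
    assume z: "al 1 = 0 \<and> al 2 = 0 \<and> al 3 = 0 \<and> al 4 = 0 \<and> al 5 = 0"
    have Cz: "C i = 0" if "0 < i" "i < 6" for i :: nat
    proof -
      have "i = 1 \<or> i = 2 \<or> i = 3 \<or> i = 4 \<or> i = 5" using that by auto
      then have "al i = 0" using z by auto
      then show ?thesis using dtz[OF that] unfolding al_def by simp
    qed
    have "C 0 * Tv (a 0) k = 0" for k
    proof -
      have "(\<Sum>i<7. C i * Tv (a i) k) = 0" using relC by blast
      then show ?thesis unfolding sum7 using Cz by (simp add: C_def)
    qed
    then have "C 0 = 0" using Tv_nz[OF anz[of 0]] by auto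
    then have "c i = 0" if "i < 6" for i using Cz[of i] that unfolding C_def
      by (cases "i = 0") auto
    then show False using c(2) by blast
  qed
  have benz: "\<not> (be 1 = 0 \<and> be 2 = 0 \<and> be 3 = 0 \<and> be 4 = 0 \<and> be 5 = 0)"
  proof
    assume z: "be 1 = 0 \<and> be 2 = 0 \<and> be 3 = 0 \<and> be 4 = 0 \<and> be 5 = 0"
    have Cz: "C' i = 0" if "0 < i" "i < 6" for i :: nat
    proof -
      have "i = 1 \<or> i = 2 \<or> i = 3 \<or> i = 4 \<or> i = 5" using that by auto
      then have "be i = 0" using z by auto
      then show ?thesis using dtz[OF that] unfolding be_def by simp
    qed
    have "C' 6 * Tv (a 6) k = 0" for k
    proof -
      have "(\<Sum>i<7. C' i * Tv (a i) k) = 0" using relC' by blast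
      moreover have z5: "C' 0 = 0" "C' 1 = 0" "C' 2 = 0" "C' 3 = 0" "C' 4 = 0" "C' 5 = 0"
        using Cz[of 1] Cz[of 2] Cz[of 3] Cz[of 4] Cz[of 5] by (simp_all add: C'_def[of 0])
      ultimately show ?thesis unfolding sum7 by (simp only: z5 mult_zero_left add_0_left add_0_right)
    qed
    then have "C' 6 = 0" using Tv_nz[OF anz[of 6]] by auto
    then have "c' i = 0" if "i < 6" for i using Cz[of "Suc i"] that unfolding C'_def
      by (cases "i = 5") auto
    then show False using c'(2) by blast
  qed
  show ?thesis
  proof (cases "al 1 = 0")
    case True
    show ?thesis
      by (rule useL4[of "al 2" 2 "al 3" 3 "al 4" 4 "al 5" 5]) (use relA alnz True in simp_all)
  next
    case a1: False
    show ?thesis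
    proof (cases "be 1 = 0")
      case True
      show ?thesis
        by (rule useL4[of "be 2" 2 "be 3" 3 "be 4" 4 "be 5" 5]) (use relB benz True in simp_all)
    next
      case b1: False
      define ga where "ga i = be 1 * al i - al 1 * be i" for i
      have relG: "\<forall>j k. ga 2 * Mt (a 2) j k + ga 3 * Mt (a 3) j k + ga 4 * Mt (a 4) j k
          + ga 5 * Mt (a 5) j k = 0"
      proof (intro allI)
        fix j k
        have eA: "al 1 * Mt (a 1) j k + al 2 * Mt (a 2) j k + al 3 * Mt (a 3) j k
          + al 4 * Mt (a 4) j k + al 5 * Mt (a 5) j k = 0" using relA by blast
        have eB: "be 1 * Mt (a 1) j k + be 2 * Mt (a 2) j k + be 3 * Mt (a 3) j k
          + be 4 * Mt (a 4) j k + be 5 * Mt (a 5) j k = 0" using relB by blast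
        have "ga 2 * Mt (a 2) j k + ga 3 * Mt (a 3) j k + ga 4 * Mt (a 4) j k + ga 5 * Mt (a 5) j k
          = be 1 * (al 1 * Mt (a 1) j k + al 2 * Mt (a 2) j k + al 3 * Mt (a 3) j k
          + al 4 * Mt (a 4) j k + al 5 * Mt (a 5) j k)
          - al 1 * (be 1 * Mt (a 1) j k + be 2 * Mt (a 2) j k + be 3 * Mt (a 3) j k
          + be 4 * Mt (a 4) j k + be 5 * Mt (a 5) j k)"
          unfolding ga_def by (simp add: algebra_simps)
        then show "ga 2 * Mt (a 2) j k + ga 3 * Mt (a 3) j k + ga 4 * Mt (a 4) j k
          + ga 5 * Mt (a 5) j k = 0" using eA eB by simp
      qed
      show ?thesis
      proof (cases "ga 2 = 0 \<and> ga 3 = 0 \<and> ga 4 = 0 \<and> ga 5 = 0")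
        case False
        show ?thesis
          by (rule useL4[of "ga 2" 2 "ga 3" 3 "ga 4" 4 "ga 5" 5]) (use relG False in simp_all)
      next
        case g0: True
        show ?thesis
        proof (cases "al 2 = 0")
          case True
          show ?thesis
            by (rule useL4[of "al 1" 1 "al 3" 3 "al 4" 4 "al 5" 5]) (use relA a1 True in simp_all)
        next
          case a2: False
          have eq: "be 1 * al 2 = al 1 * be 2" using g0 unfolding ga_def by simp
          have b2: "be 2 \<noteq> 0" using eq a2 b1 by auto
          have nz: "C 1 \<noteq> 0" "C 2 \<noteq> 0" "C' 1 \<noteq> 0" "C' 2 \<noteq> 0"
            using a1 a2 b1 b2 unfolding al_def be_def by auto
          have d: "dt (a 0) (a 1) \<noteq> 0" "dt (a 0) (a 2) \<noteq> 0" "dt (a 6) (a 1) \<noteq> 0" "dt (a 6) (a 2) \<noteq> 0"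
            using dtz by auto
          have eq2: "C' 1 * dt (a 6) (a 1) * (C 2 * dt (a 0) (a 2)) = C 1 * dt (a 0) (a 1) * (C' 2 * dt (a 6) (a 2))"
            using eq unfolding al_def be_def by simp
          have crv: "cr (a 0) (a 6) (a 2) (a 1) = (C 1 * C' 2) / (C 2 * C' 1)"
            unfolding cr_def using eq2 nz d by (simp add: field_simps)
          have "(cr (a 0) (a 6) (a 2) (a 1)) ^ q = cr (a 0) (a 6) (a 2) (a 1)"
            unfolding crv using CK[of 1] CK[of 2] by (simp add: Fq_def power_divide power_mult_distrib)
          then show ?thesis by (rule FIN[rotated -1]) simp_all
        qed
      qed
    qed
  qed
qed

end
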